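(* For any consistent $\mathrm{k}$-step IEMS method with real coefficients $a_j$ ($0\le j\le\mathrm{k}-1$), $b_j$ ($0\le j\le\mathrm{k}$), $c_j$ ($0\le j\le\mathrm{k}-1$), the implicit-explicit controllability intensity satisfies $$\mathfrak{I}_{\mathrm{IE}}:=\frac{\min_{\theta\in[0,2\pi)}\Re\big[b(\theta)/a(\theta)\big]}{\max_{\theta\in[0,2\pi)}\big|c(\theta)/a(\theta)\big|}\le1,$$ and the value $1$ is achieved by the implicit-explicit Euler scheme ($\mathrm{k}=1$, $a_0=1$, $b_0=1$, $b_1=0$, $c_0=1$).
   Context: $a(\theta)=\sum_ja_je^{\imath j\theta}$, $b(\theta)=\sum_jb_je^{\imath j\theta}$, $c(\theta)=\sum_jc_je^{\imath j\theta}$ with $\imath=\sqrt{-1}$. The method is $\sum_{j=0}^{\mathrm{k}-1}a_j\partial_\tau u^{n-j}+\varpi\sum_{j=0}^{\mathrm{k}}b_j\mathcal{L}u^{n-j}=\sum_{j=0}^{\mathrm{k}-1}c_j\mathcal{F}(u^{n-j-1})$; consistency means $\sum_{j=0}^{\mathrm{k}-1}a_j=\sum_{j=0}^{\mathrm{k}}b_j=\sum_{j=0}^{\mathrm{k}-1}c_j=1$. The maximum and minimum are assumed to be finite, with the denominator positive. *)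

theory Defs
  imports Complex_Main
begin

definition symb :: "nat \<Rightarrow> (nat \<Rightarrow> real) \<Rightarrow> real \<Rightarrow> complex" where
  "symb m x \<theta> = (\<Sum>j<m. complex_of_real (x j) * exp (\<i> * of_nat j * complex_of_real \<theta>))"

text \<open>Implicit-explicit controllability intensity of a k-step IEMS method with coefficients
  a_0..a_(k-1), b_0..b_k, c_0..c_(k-1): min over [0,2pi) of Re(b/a) divided by
  max over [0,2pi) of |c/a| (min/max are attained when a does not vanish).\<close>
definition IE_intensity :: "nat \<Rightarrow> (nat \<Rightarrow> real) \<Rightarrow> (nat \<Rightarrow> real) \<Rightarrow> (nat \<Rightarrow> real) \<Rightarrow> real" where
  "IE_intensity k a b c =
     (INF \<theta>\<in>{0..<2*pi}. Re (symb (k+1) b \<theta> / symb k a \<theta>)) /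
     (SUP \<theta>\<in>{0..<2*pi}. cmod (symb k c \<theta> / symb k a \<theta>))"

end

theory Submission
  imports Defs "HOL-Analysis.Analysis"
begin

lemma symb_cont: "continuous_on S (symb m x)"
  unfolding symb_def by (intro continuous_intros)

lemma symb_0: "symb m x 0 = (\<Sum>j<m. complex_of_real (x j))"
  unfolding symb_def by simp

lemma symb_2pi: "symb m x (2*pi) = symb m x 0"
proof -
  have "exp (\<i> * of_nat j * complex_of_real (2*pi)) = 1" for j :: nat
  proof -
    have "\<i> * of_nat j * complex_of_real (2*pi) = of_nat j * (2 * of_real pi * \<i>)"
      by simp
    then show ?thesis by (simp only: exp_of_nat_mult exp_two_pi_i power_one)
  qed
  then show ?thesis unfolding symb_def by simp
qed

lemma bdd_helper:
  fixes g :: "real \<Rightarrow> real"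
  assumes "continuous_on {0..2*pi} g"
  shows "bdd_above (g ` {0..<2*pi})" "bdd_below (g ` {0..<2*pi})"
proof -
  have "compact (g ` {0..2*pi})" using assms compact_continuous_image by blast
  then have b: "bounded (g ` {0..2*pi})" by (rule compact_imp_bounded)
  have s: "g ` {0..<2*pi} \<subseteq> g ` {0..2*pi}" by auto
  show "bdd_above (g ` {0..<2*pi})"
    by (rule bdd_above_mono[OF bounded_imp_bdd_above[OF b] s])
  show "bdd_below (g ` {0..<2*pi})"
    by (rule bdd_below_mono[OF bounded_imp_bdd_below[OF b] s])
qed

theorem corollary3p4:
  fixes k :: nat and a b c :: "nat \<Rightarrow> real"
  assumes cons_a: "(\<Sum>j<k. a j) = 1"
      and cons_b: "(\<Sum>j\<le>k. b j) = 1"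
      and cons_c: "(\<Sum>j<k. c j) = 1"
      and a_nz: "\<forall>\<theta>\<in>{0..<2*pi}. symb k a \<theta> \<noteq> 0"
      and den_pos: "(SUP \<theta>\<in>{0..<2*pi}. cmod (symb k c \<theta> / symb k a \<theta>)) > 0"
  shows "IE_intensity k a b c \<le> 1
         \<and> IE_intensity 1 (\<lambda>j. 1) (\<lambda>j. if j = 0 then 1 else 0) (\<lambda>j. 1) = 1"
proof
  have a0: "symb k a 0 = 1" using cons_a unfolding symb_0
    by (metis of_real_1 of_real_sum)
  have c0: "symb k c 0 = 1" using cons_c unfolding symb_0
    by (metis of_real_1 of_real_sum)
  have b0: "symb (k+1) b 0 = 1" using cons_b unfolding symb_0
    by (metis lessThan_Suc_atMost Suc_eq_plus1 of_real_1 of_real_sum)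
  have nz: "\<forall>\<theta>\<in>{0..2*pi}. symb k a \<theta> \<noteq> 0"
  proof
    fix \<theta> :: real assume "\<theta> \<in> {0..2*pi}"
    then consider "\<theta> \<in> {0..<2*pi}" | "\<theta> = 2*pi" by fastforce
    then show "symb k a \<theta> \<noteq> 0" using a_nz a0 symb_2pi[of k a] by cases auto
  qed
  have c1: "continuous_on {0..2*pi} (\<lambda>\<theta>. Re (symb (k+1) b \<theta> / symb k a \<theta>))"
    using nz by (intro continuous_intros symb_cont) auto
  have c2: "continuous_on {0..2*pi} (\<lambda>\<theta>. cmod (symb k c \<theta> / symb k a \<theta>))"
    using nz by (intro continuous_intros symb_cont) auto
  have z: "(0::real) \<in> {0..<2*pi}" using pi_gt_zero by simp
  define I where "I = (INF \<theta>\<in>{0..<2*pi}. Re (symb (k+1) b \<theta> / symb k a \<theta>))"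
  define S where "S = (SUP \<theta>\<in>{0..<2*pi}. cmod (symb k c \<theta> / symb k a \<theta>))"
  have "I \<le> Re (symb (k+1) b 0 / symb k a 0)"
    unfolding I_def by (rule cINF_lower[OF bdd_helper(2)[OF c1] z])
  then have I1: "I \<le> 1" using a0 b0 by simp
  have "cmod (symb k c 0 / symb k a 0) \<le> S"
    unfolding S_def by (rule cSUP_upper[OF z bdd_helper(1)[OF c2]])
  then have S1: "1 \<le> S" using a0 c0 by simp
  show "IE_intensity k a b c \<le> 1"
    unfolding IE_intensity_def I_def[symmetric] S_def[symmetric]
    using I1 S1 by (simp add: divide_le_eq)
next
  have e1: "symb 1 (\<lambda>j. 1) \<theta> = 1" for \<theta> unfolding symb_def by simp
  have e2: "symb (1+1) (\<lambda>j. if j = 0 then 1 else 0) \<theta> = 1" for \<theta>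
    unfolding symb_def by (simp add: numeral_2_eq_2 lessThan_Suc)
  have z: "{0..<2*pi} \<noteq> ({}::real set)" using pi_gt_zero by simp
  show "IE_intensity 1 (\<lambda>j. 1) (\<lambda>j. if j = 0 then 1 else 0) (\<lambda>j. 1) = 1"
    unfolding IE_intensity_def e1 e2 using z by simp
qed

end
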